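(* Assume (A1). For all $i,j\in I_N$ and $(y,x)\in J_j\times J_i$, $$\mathcal{D}_{\mathrm{junction}}^{ji}(y,x)=\begin{cases}\mathcal{D}_{\mathrm{linear}}^{ji}(y,x)&\text{if }(y,x)\in\Delta^{ji},\\ \mathcal{D}_{\mathrm{implicit}}^{ji}(y,x)&\text{if }(y,x)\in(J_j\times J_i)\setminus\Delta^{ji}.\end{cases}$$
   Context: Junction: fix an integer $N\ge1$ and $N$ distinct unit vectors $e_1,\dots,e_N\in\mathbb{R}^2$. Set $J_i=[0,\infty)e_i$, $J=\bigcup_iJ_i$, $I_N=\{1,\dots,N\}$. Each $x\in J_i$ is written $x=x_ie_i$, $x_i\ge0$. For a function $f$ on $J\times J$ (variables $(y,x)$), $f^{ji}$ denotes its restriction to $J_j\times J_i$. (A1): there is $\gamma>0$ with $L_i\in C^2(\mathbb{R})$, $L_i''\ge\gamma$ for each $i$. $L_0(0)=\min_jL_j(0)$, $I_0=\{l: L_l(0)=L_0(0)\}$. $K_l(\xi)=L_l(\xi)-\xi L_l'(\xi)-L_0(0)$; $\xi_l^-\le0$ (resp. $\xi_l^+\ge0$) is the unique zero of $K_l$ on $(-\infty,0]$ (resp. $[0,\infty)$); these are $0$ iff $l\in I_0$. For $\tau\in[0,1]$: $\mathcal{E}_1(\tau,y)=\tau L_j(-y_j/\tau)-\tau L_0(0)$ if $y=y_je_j\ne0$, $\tau\ne0$; $\mathcal{E}_1(\tau,0)=0$; $\mathcal{E}_1(0,y)=+\infty$ if $y\ne0$. $\mathcal{E}_2(\tau,x)=(1-\tau)L_i(x_i/(1-\tau))+\tau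 L_0(0)$ if $x=x_ie_i\ne0$, $\tau\ne1$; $\mathcal{E}_2(\tau,0)=L_0(0)$; $\mathcal{E}_2(1,x)=+\infty$ if $x\ne0$. Define $\mathcal{D}_{\mathrm{junction}}(y,x)=\inf_{0\le\tau_1\le\tau_2\le1}\{\mathcal{E}_1(\tau_1,y)+\mathcal{E}_2(\tau_2,x)\}$ and $\mathcal{D}_{\mathrm{implicit}}(y,x)=\inf_{0\le\tau\le1}\{\mathcal{E}_1(\tau,y)+\mathcal{E}_2(\tau,x)\}$. For $(y,x)\in J_j\times J_i$: $\mathcal{D}_{\mathrm{linear}}^{ji}(y,x)=-L_j'(\xi_j^-)y_j+L_i'(\xi_i^+)x_i+L_0(0)$. If $i,j\notin I_0$, $\Delta^{ji}=\{(y,x)\in J_j\times J_i: x_i/\xi_i^+-y_j/\xi_j^-<1\}$; if $i\in I_0$ or $j\in I_0$, $\Delta^{ji}=\emptyset$. *)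

theory Defs
  imports "HOL-Analysis.Analysis"
begin

text \<open>Junction in the plane: branches J_i = [0,oo) e_i, points are vectors in real^2.
  For x in J_i the coordinate x_i equals the inner product x \<bullet> e_i.\<close>

definition Jray :: "(nat \<Rightarrow> real^2) \<Rightarrow> nat \<Rightarrow> (real^2) set" where
  "Jray e i = {t *\<^sub>R e i | t. t \<ge> 0}"

definition Jset :: "(nat \<Rightarrow> real^2) \<Rightarrow> nat \<Rightarrow> (real^2) set" where
  "Jset e N = (\<Union>i\<in>{1..N}. Jray e i)"

definition coord :: "(nat \<Rightarrow> real^2) \<Rightarrow> nat \<Rightarrow> real^2 \<Rightarrow> real" where
  "coord e i x = x \<bullet> e i"

definition branch :: "(nat \<Rightarrow> real^2) \<Rightarrow> nat \<Rightarrow> real^2 \<Rightarrow> nat" where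
  "branch e N y = (THE j. j \<in> {1..N} \<and> y \<in> Jray e j)"

definition L00 :: "(nat \<Rightarrow> real \<Rightarrow> real) \<Rightarrow> nat \<Rightarrow> real" where
  "L00 L N = Min ((\<lambda>j. L j 0) ` {1..N})"

definition I0 :: "(nat \<Rightarrow> real \<Rightarrow> real) \<Rightarrow> nat \<Rightarrow> nat set" where
  "I0 L N = {l \<in> {1..N}. L l 0 = L00 L N}"

definition Kfun :: "(nat \<Rightarrow> real \<Rightarrow> real) \<Rightarrow> nat \<Rightarrow> nat \<Rightarrow> real \<Rightarrow> real" where
  "Kfun L N l \<xi> = L l \<xi> - \<xi> * deriv (L l) \<xi> - L00 L N"

definition xi_minus :: "(nat \<Rightarrow> real \<Rightarrow> real) \<Rightarrow> nat \<Rightarrow> nat \<Rightarrow> real" where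
  "xi_minus L N l = (THE \<xi>. \<xi> \<le> 0 \<and> Kfun L N l \<xi> = 0)"

definition xi_plus :: "(nat \<Rightarrow> real \<Rightarrow> real) \<Rightarrow> nat \<Rightarrow> nat \<Rightarrow> real" where
  "xi_plus L N l = (THE \<xi>. \<xi> \<ge> 0 \<and> Kfun L N l \<xi> = 0)"

definition E1 :: "(nat \<Rightarrow> real^2) \<Rightarrow> nat \<Rightarrow> (nat \<Rightarrow> real \<Rightarrow> real) \<Rightarrow> real \<Rightarrow> real^2 \<Rightarrow> ereal" where
  "E1 e N L \<tau> y =
     (if y = 0 then 0
      else if \<tau> = 0 then \<infinity>
      else (let j = branch e N y in
            ereal (\<tau> * L j (- coord e j y / \<tau>) - \<tau> * L00 L N)))"

definition E2 :: "(nat \<Rightarrow> real^2) \<Rightarrow> nat \<Rightarrow> (nat \<Rightarrow> real \<Rightarrow> real) \<Rightarrow> real \<Rightarrow> real^2 \<Rightarrow> ereal" where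
  "E2 e N L \<tau> x =
     (if x = 0 then ereal (L00 L N)
      else if \<tau> = 1 then \<infinity>
      else (let i = branch e N x in
            ereal ((1 - \<tau>) * L i (coord e i x / (1 - \<tau>)) + \<tau> * L00 L N)))"

definition D_junction :: "(nat \<Rightarrow> real^2) \<Rightarrow> nat \<Rightarrow> (nat \<Rightarrow> real \<Rightarrow> real) \<Rightarrow> real^2 \<Rightarrow> real^2 \<Rightarrow> ereal" where
  "D_junction e N L y x =
     Inf {E1 e N L \<tau>1 y + E2 e N L \<tau>2 x | \<tau>1 \<tau>2. 0 \<le> \<tau>1 \<and> \<tau>1 \<le> \<tau>2 \<and> \<tau>2 \<le> 1}"

definition D_implicit :: "(nat \<Rightarrow> real^2) \<Rightarrow> nat \<Rightarrow> (nat \<Rightarrow> real \<Rightarrow> real) \<Rightarrow> real^2 \<Rightarrow> real^2 \<Rightarrow> ereal" where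
  "D_implicit e N L y x =
     Inf {E1 e N L \<tau> y + E2 e N L \<tau> x | \<tau>. 0 \<le> \<tau> \<and> \<tau> \<le> 1}"

definition D_linear :: "(nat \<Rightarrow> real^2) \<Rightarrow> nat \<Rightarrow> (nat \<Rightarrow> real \<Rightarrow> real) \<Rightarrow> nat \<Rightarrow> nat \<Rightarrow> real^2 \<Rightarrow> real^2 \<Rightarrow> real" where
  "D_linear e N L j i y x =
     - deriv (L j) (xi_minus L N j) * coord e j y + deriv (L i) (xi_plus L N i) * coord e i x + L00 L N"

definition Delta :: "(nat \<Rightarrow> real^2) \<Rightarrow> nat \<Rightarrow> (nat \<Rightarrow> real \<Rightarrow> real) \<Rightarrow> nat \<Rightarrow> nat \<Rightarrow> ((real^2) \<times> (real^2)) set" where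
  "Delta e N L j i =
     (if i \<notin> I0 L N \<and> j \<notin> I0 L N then
        {(y, x). y \<in> Jray e j \<and> x \<in> Jray e i \<and>
                 coord e i x / xi_plus L N i - coord e j y / xi_minus L N j < 1}
      else {})"

end

theory Submission imports Defs begin


lemma K_minus:
  fixes f f1 f2 :: "real \<Rightarrow> real" and \<gamma> c :: real
  assumes d1: "\<And>t. (f has_real_derivative f1 t) (at t)"
    and d2: "\<And>t. (f1 has_real_derivative f2 t) (at t)"
    and g: "\<And>t. f2 t \<ge> \<gamma>" and gp: "\<gamma> > 0" and c: "c \<le> f 0"
  shows "\<exists>!\<xi>. \<xi> \<le> 0 \<and> f \<xi> - \<xi> * f1 \<xi> - c = 0"
    and "\<And>\<xi> s. \<xi> \<le> 0 \<Longrightarrow> f \<xi> - \<xi> * f1 \<xi> - c = 0 \<Longrightarrow> s \<le> \<xi> \<Longrightarrow> f s - s * f1 s - c \<le> 0"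
    and "\<And>\<xi> s. \<xi> \<le> 0 \<Longrightarrow> f \<xi> - \<xi> * f1 \<xi> - c = 0 \<Longrightarrow> \<xi> \<le> s \<Longrightarrow> s \<le> 0 \<Longrightarrow> f s - s * f1 s - c \<ge> 0"
proof -
  define K where "K = (\<lambda>\<xi>. f \<xi> - \<xi> * f1 \<xi> - c)"
  have dK: "(K has_real_derivative (- t * f2 t)) (at t)" for t
    unfolding K_def
    by (auto intro!: derivative_eq_intros d1 d2 simp: algebra_simps)
  have strict: "K s < K t" if "s < t" "t \<le> 0" for s t
  proof -
    obtain z where z: "s < z" "z < t" "K t - K s = (t - s) * (- z * f2 z)"
      using MVT2[OF \<open>s < t\<close>, of K "\<lambda>t. - t * f2 t"] dK by blast
    have "f2 z > 0" using g[of z] gp by linarith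
    hence "- z * f2 z > 0" using z that by (simp add: mult_neg_pos)
    hence "(t - s) * (- z * f2 z) > 0" using that by (metis diff_gt_0_iff_gt mult_pos_pos)
    thus ?thesis using z by simp
  qed
  have mono: "K s \<le> K t" if "s \<le> t" "t \<le> 0" for s t
    using strict[of s t] that by (cases "s = t") auto
  have lin: "K s \<le> K (-1) - \<gamma> * (-1 - s)" if "s \<le> -1" for s
  proof (cases "s = -1")
    case False
    then have "s < -1" using that by simp
    then obtain z where z: "s < z" "z < -1" "K (-1) - K s = (-1 - s) * (- z * f2 z)"
      using MVT2[of s "-1" K "\<lambda>t. - t * f2 t"] dK by blast
    have "- z * f2 z \<ge> 1 * \<gamma>"
      using g[of z] z gp by (intro mult_mono) auto
    hence "(-1 - s) * (- z * f2 z) \<ge> (-1 - s) * \<gamma>" using \<open>s < -1\<close>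
      by (intro mult_left_mono) auto
    thus ?thesis using z by (simp add: algebra_simps)
  qed simp
  define s0 where "s0 = -1 - \<bar>K (-1)\<bar> / \<gamma>"
  have s0: "s0 \<le> -1" unfolding s0_def using gp by simp
  have "K s0 \<le> K (-1) - \<gamma> * (\<bar>K (-1)\<bar> / \<gamma>)" using lin[OF s0] unfolding s0_def by simp
  also have "\<dots> = K (-1) - \<bar>K (-1)\<bar>" using gp by simp
  finally have Ks0: "K s0 \<le> 0" by simp
  have K0: "K 0 \<ge> 0" unfolding K_def using c by simp
  have cont: "isCont K t" for t using dK DERIV_isCont by blast
  obtain \<xi> where xi: "s0 \<le> \<xi>" "\<xi> \<le> 0" "K \<xi> = 0"
    using IVT[of K s0 0 0] Ks0 K0 s0 cont by auto
  show "\<exists>!\<xi>. \<xi> \<le> 0 \<and> f \<xi> - \<xi> * f1 \<xi> - c = 0"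
  proof (rule ex1I[of _ \<xi>])
    show "\<xi> \<le> 0 \<and> f \<xi> - \<xi> * f1 \<xi> - c = 0" using xi unfolding K_def by simp
    fix \<eta> assume "\<eta> \<le> 0 \<and> f \<eta> - \<eta> * f1 \<eta> - c = 0"
    hence "\<eta> \<le> 0" "K \<eta> = 0" unfolding K_def by auto
    then show "\<eta> = \<xi>" using strict[of \<eta> \<xi>] strict[of \<xi> \<eta>] xi
      by (cases "\<eta> < \<xi>"; cases "\<xi> < \<eta>") auto
  qed
  show "f s - s * f1 s - c \<le> 0" if "\<xi> \<le> 0" "f \<xi> - \<xi> * f1 \<xi> - c = 0" "s \<le> \<xi>" for \<xi> s
    using mono[of s \<xi>] that unfolding K_def by simp
  show "f s - s * f1 s - c \<ge> 0" if "\<xi> \<le> 0" "f \<xi> - \<xi> * f1 \<xi> - c = 0" "\<xi> \<le> s" "s \<le> 0" for \<xi> s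
    using mono[of \<xi> s] that unfolding K_def by simp
qed

lemma K_plus:
  fixes f f1 f2 :: "real \<Rightarrow> real" and \<gamma> c :: real
  assumes d1: "\<And>t. (f has_real_derivative f1 t) (at t)"
    and d2: "\<And>t. (f1 has_real_derivative f2 t) (at t)"
    and g: "\<And>t. f2 t \<ge> \<gamma>" and gp: "\<gamma> > 0" and c: "c \<le> f 0"
  shows "\<exists>!\<xi>. \<xi> \<ge> 0 \<and> f \<xi> - \<xi> * f1 \<xi> - c = 0"
    and "\<And>\<xi> s. \<xi> \<ge> 0 \<Longrightarrow> f \<xi> - \<xi> * f1 \<xi> - c = 0 \<Longrightarrow> \<xi> \<le> s \<Longrightarrow> f s - s * f1 s - c \<le> 0"
    and "\<And>\<xi> s. \<xi> \<ge> 0 \<Longrightarrow> f \<xi> - \<xi> * f1 \<xi> - c = 0 \<Longrightarrow> s \<le> \<xi> \<Longrightarrow> 0 \<le> s \<Longrightarrow> f s - s * f1 s - c \<ge> 0"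
proof -
  have e1: "((\<lambda>t. f (- t)) has_real_derivative (- f1 (- t))) (at t)" for t
    using DERIV_mirror[of f "f1 (-t)" t] d1 by simp
  have e2: "((\<lambda>t. - f1 (- t)) has_real_derivative (f2 (- t))) (at t)" for t
  proof -
    have "((\<lambda>x. f1 (- x)) has_real_derivative - f2 (- t)) (at t)"
      using DERIV_mirror[of f1 "f2 (-t)" t] d2[of "-t"] by simp
    then show ?thesis using DERIV_minus by fastforce
  qed
  have c': "c \<le> (\<lambda>t. f (- t)) 0" using c by simp
  have g': "\<And>t. \<gamma> \<le> (\<lambda>t. f2 (- t)) t" using g by simp
  note KM = K_minus[of "\<lambda>t. f (- t)" "\<lambda>t. - f1 (- t)" "\<lambda>t. f2 (- t)" \<gamma> c, OF e1 e2 g' gp c']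
  from KM(1) obtain \<eta> where eta: "\<eta> \<le> 0 \<and> f (- \<eta>) - \<eta> * - f1 (- \<eta>) - c = 0"
    and uq0: "\<And>\<zeta>. \<zeta> \<le> 0 \<and> f (- \<zeta>) - \<zeta> * - f1 (- \<zeta>) - c = 0 \<Longrightarrow> \<zeta> = \<eta>"
    by (elim ex1E) blast
  show "\<exists>!\<xi>. \<xi> \<ge> 0 \<and> f \<xi> - \<xi> * f1 \<xi> - c = 0"
  proof (rule ex1I[of _ "-\<eta>"])
    show "0 \<le> - \<eta> \<and> f (- \<eta>) - - \<eta> * f1 (- \<eta>) - c = 0" using eta by simp
    fix \<zeta> assume "0 \<le> \<zeta> \<and> f \<zeta> - \<zeta> * f1 \<zeta> - c = 0"
    then have "- \<zeta> \<le> 0 \<and> f (- (-\<zeta>)) - (-\<zeta>) * - f1 (- (-\<zeta>)) - c = 0" by simp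
    then show "\<zeta> = - \<eta>" using uq0[of "-\<zeta>"] by simp
  qed
  show "f s - s * f1 s - c \<le> 0" if "\<xi> \<ge> 0" "f \<xi> - \<xi> * f1 \<xi> - c = 0" "\<xi> \<le> s" for \<xi> s
  proof -
    have "- \<xi> \<le> 0" "f (- (-\<xi>)) - (-\<xi>) * - f1 (- (-\<xi>)) - c = 0" "-s \<le> -\<xi>" using that by auto
    from KM(2)[OF this] show ?thesis by simp
  qed
  show "f s - s * f1 s - c \<ge> 0" if "\<xi> \<ge> 0" "f \<xi> - \<xi> * f1 \<xi> - c = 0" "s \<le> \<xi>" "0 \<le> s" for \<xi> s
  proof -
    have "- \<xi> \<le> 0" "f (- (-\<xi>)) - (-\<xi>) * - f1 (- (-\<xi>)) - c = 0" "-\<xi> \<le> -s" "-s \<le> 0" using that by auto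
    from KM(3)[OF this] show ?thesis by simp
  qed
qed



lemma junction_inf:
  fixes g h :: "real \<Rightarrow> ereal" and p q :: real
  assumes p: "0 \<le> p" "p \<le> 1" and q: "0 \<le> q" "q \<le> 1"
    and gdec0: "\<forall>s t. 0 \<le> s \<and> s \<le> t \<and> t \<le> p \<longrightarrow> g t \<le> g s"
    and ginc0: "\<forall>s t. p \<le> s \<and> s \<le> t \<and> t \<le> 1 \<longrightarrow> g s \<le> g t"
    and hdec0: "\<forall>s t. 0 \<le> s \<and> s \<le> t \<and> t \<le> q \<longrightarrow> h t \<le> h s"
    and hinc0: "\<forall>s t. q \<le> s \<and> s \<le> t \<and> t \<le> 1 \<longrightarrow> h s \<le> h t"
  shows "q \<le> p \<Longrightarrow> Inf {g t1 + h t2 | t1 t2. 0 \<le> t1 \<and> t1 \<le> t2 \<and> t2 \<le> 1}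
            = Inf {g t + h t | t. 0 \<le> t \<and> t \<le> 1}"
    and "p \<le> q \<Longrightarrow> Inf {g t1 + h t2 | t1 t2. 0 \<le> t1 \<and> t1 \<le> t2 \<and> t2 \<le> 1} = g p + h q"
proof -
  have gdec: "\<And>s t. 0 \<le> s \<Longrightarrow> s \<le> t \<Longrightarrow> t \<le> p \<Longrightarrow> g t \<le> g s" using gdec0 by blast
  have ginc: "\<And>s t. p \<le> s \<Longrightarrow> s \<le> t \<Longrightarrow> t \<le> 1 \<Longrightarrow> g s \<le> g t" using ginc0 by blast
  have hdec: "\<And>s t. 0 \<le> s \<Longrightarrow> s \<le> t \<Longrightarrow> t \<le> q \<Longrightarrow> h t \<le> h s" using hdec0 by blast
  have hinc: "\<And>s t. q \<le> s \<Longrightarrow> s \<le> t \<Longrightarrow> t \<le> 1 \<Longrightarrow> h s \<le> h t" using hinc0 by blast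
  {
  assume qp: "q \<le> p"
  show "Inf {g t1 + h t2 | t1 t2. 0 \<le> t1 \<and> t1 \<le> t2 \<and> t2 \<le> 1}
            = Inf {g t + h t | t. 0 \<le> t \<and> t \<le> 1}"
  proof (rule antisym)
    show "Inf {g t1 + h t2 | t1 t2. 0 \<le> t1 \<and> t1 \<le> t2 \<and> t2 \<le> 1}
            \<le> Inf {g t + h t | t. 0 \<le> t \<and> t \<le> 1}"
      by (rule Inf_superset_mono) blast
    show "Inf {g t + h t | t. 0 \<le> t \<and> t \<le> 1}
            \<le> Inf {g t1 + h t2 | t1 t2. 0 \<le> t1 \<and> t1 \<le> t2 \<and> t2 \<le> 1}"
    proof (rule Inf_greatest, clarify)
      fix t1 t2 :: real assume t: "0 \<le> t1" "t1 \<le> t2" "t2 \<le> 1"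
      have "\<exists>t. 0 \<le> t \<and> t \<le> 1 \<and> g t + h t \<le> g t1 + h t2"
      proof (cases "t2 \<le> p")
        case True
        then show ?thesis using t gdec[of t1 t2]
          by (intro exI[of _ t2]) (auto intro: add_mono)
      next
        case False
        show ?thesis
        proof (cases "q \<le> t1")
          case True
          then show ?thesis using t hinc[of t1 t2]
            by (intro exI[of _ t1]) (auto intro: add_mono)
        next
          case f2: False
          then show ?thesis using t False p qp gdec[of t1 p] hinc[of p t2]
            by (intro exI[of _ p]) (auto intro: add_mono)
        qed
      qed
      then obtain t where "0 \<le> t" "t \<le> 1" "g t + h t \<le> g t1 + h t2" by blast
      then show "Inf {g t + h t | t. 0 \<le> t \<and> t \<le> 1} \<le> g t1 + h t2"
        by (intro Inf_lower2[of "g t + h t"]) blast+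
    qed
  qed
  }
  {
  assume pq: "p \<le> q"
  have gm: "g p \<le> g t" if "0 \<le> t" "t \<le> 1" for t
    using gdec[of t p] ginc[of p t] that p by (cases "t \<le> p") auto
  have hm: "h q \<le> h t" if "0 \<le> t" "t \<le> 1" for t
    using hdec[of t q] hinc[of q t] that q by (cases "t \<le> q") auto
  show "Inf {g t1 + h t2 | t1 t2. 0 \<le> t1 \<and> t1 \<le> t2 \<and> t2 \<le> 1} = g p + h q"
  proof (rule antisym)
    show "Inf {g t1 + h t2 | t1 t2. 0 \<le> t1 \<and> t1 \<le> t2 \<and> t2 \<le> 1} \<le> g p + h q"
      using p q pq by (intro Inf_lower) blast
    show "g p + h q \<le> Inf {g t1 + h t2 | t1 t2. 0 \<le> t1 \<and> t1 \<le> t2 \<and> t2 \<le> 1}"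
      using gm hm by (intro Inf_greatest) (force intro: add_mono)
  qed
  }
qed



lemma phi_deriv:
  fixes f f1 :: "real \<Rightarrow> real"
  assumes d1: "\<And>u. (f has_real_derivative f1 u) (at u)" and t: "t \<noteq> 0"
  shows "((\<lambda>\<tau>. \<tau> * f (- a / \<tau>) - \<tau> * c) has_real_derivative
           (f (- a / t) - (- a / t) * f1 (- a / t) - c)) (at t)"
proof -
  have "((\<lambda>\<tau>. - a / \<tau>) has_real_derivative (a / t^2)) (at t)"
    using t by (auto intro!: derivative_eq_intros simp: power2_eq_square field_simps)
  then have "((\<lambda>\<tau>. f (- a / \<tau>)) has_real_derivative (f1 (- a / t) * (a / t^2))) (at t)"
    using DERIV_chain2[OF d1] by blast
  then have D: "((\<lambda>\<tau>. \<tau> * f (- a / \<tau>) - \<tau> * c) has_real_derivative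
          (t * (f1 (- a / t) * (a / t^2)) + 1 * f (- a / t) - 1 * c)) (at t)"
    by (rule DERIV_diff[OF DERIV_mult'[OF DERIV_ident] DERIV_cmult_right[OF DERIV_ident]])
  have eq: "t * (f1 (- a / t) * (a / t^2)) + 1 * f (- a / t) - 1 * c
      = f (- a / t) - (- a / t) * f1 (- a / t) - c"
    using t by (simp add: power2_eq_square field_simps)
  show ?thesis using D unfolding eq .
qed

lemma psi_deriv:
  fixes f f1 :: "real \<Rightarrow> real"
  assumes d1: "\<And>u. (f has_real_derivative f1 u) (at u)" and t: "t \<noteq> 1"
  shows "((\<lambda>\<tau>. (1 - \<tau>) * f (b / (1 - \<tau>)) + \<tau> * c) has_real_derivative
           (- (f (b / (1 - t)) - (b / (1 - t)) * f1 (b / (1 - t)) - c))) (at t)"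
proof -
  have t': "1 - t \<noteq> 0" using t by simp
  have "((\<lambda>\<tau>. b / (1 - \<tau>)) has_real_derivative (b / (1 - t)^2)) (at t)"
    using t' by (auto intro!: derivative_eq_intros simp: power2_eq_square field_simps)
  then have "((\<lambda>\<tau>. f (b / (1 - \<tau>))) has_real_derivative (f1 (b / (1 - t)) * (b / (1 - t)^2))) (at t)"
    using DERIV_chain2[OF d1] by blast
  then have D: "((\<lambda>\<tau>. (1 - \<tau>) * f (b / (1 - \<tau>)) + \<tau> * c) has_real_derivative
          ((1 - t) * (f1 (b / (1 - t)) * (b / (1 - t)^2)) + (0 - 1) * f (b / (1 - t)) + 1 * c)) (at t)"
    by (rule DERIV_add[OF DERIV_mult'[OF DERIV_diff[OF DERIV_const DERIV_ident]] DERIV_cmult_right[OF DERIV_ident]])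
  have eq: "(1 - t) * (f1 (b / (1 - t)) * (b / (1 - t)^2)) + (0 - 1) * f (b / (1 - t)) + 1 * c
      = - (f (b / (1 - t)) - (b / (1 - t)) * f1 (b / (1 - t)) - c)"
  proof -
    have h: "(1 - t) * (b / (1 - t)^2) = b / (1 - t)" using t' by (simp add: power2_eq_square)
    have "(1 - t) * (f1 (b / (1 - t)) * (b / (1 - t)^2)) = f1 (b / (1 - t)) * ((1 - t) * (b / (1 - t)^2))"
      by simp
    then show ?thesis unfolding h by simp
  qed
  show ?thesis using D unfolding eq .
qed

lemma ray_coord:
  assumes "norm (e j) = 1" "y \<in> Jray e j"
  shows "y = coord e j y *\<^sub>R e j" "coord e j y \<ge> 0"
proof -
  obtain t where t: "t \<ge> 0" "y = t *\<^sub>R e j" using assms(2) unfolding Jray_def by auto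
  have ee: "e j \<bullet> e j = 1" using assms(1) power2_norm_eq_inner[of "e j"] by simp
  have "coord e j y = t" unfolding coord_def t(2) using ee by simp
  then show "y = coord e j y *\<^sub>R e j" "coord e j y \<ge> 0" using t by auto
qed

lemma branch_eq:
  assumes unit: "\<forall>k\<in>{1..N}. norm (e k) = 1" and inj: "inj_on e {1..N}"
    and j: "j \<in> {1..N}" and y: "y \<in> Jray e j" and y0: "y \<noteq> 0"
  shows "branch e N y = j"
  unfolding branch_def
proof (rule the_equality)
  show "j \<in> {1..N} \<and> y \<in> Jray e j" using j y by simp
  fix k assume k: "k \<in> {1..N} \<and> y \<in> Jray e k"
  obtain a where a: "a \<ge> 0" "y = a *\<^sub>R e j" using y unfolding Jray_def by auto
  obtain t where t: "t \<ge> 0" "y = t *\<^sub>R e k" using k unfolding Jray_def by auto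
  have nj: "norm (e j) = 1" "norm (e k) = 1" using unit j k by auto
  have "norm y = a" using a nj by simp
  moreover have "norm y = t" using t nj by simp
  ultimately have "a = t" by simp
  moreover have "a \<noteq> 0" using a y0 by auto
  ultimately have "e j = e k" using a t by simp
  then show "k = j" using inj j k by (auto dest: inj_onD)
qed

theorem mainTheorem17:
  fixes e :: "nat \<Rightarrow> real^2" and N :: nat and L :: "nat \<Rightarrow> real \<Rightarrow> real"
    and L1 L2 :: "nat \<Rightarrow> real \<Rightarrow> real" and \<gamma> :: real
    and i j :: nat and y x :: "real^2"
  assumes N: "N \<ge> 1"
    and unit: "\<forall>k\<in>{1..N}. norm (e k) = 1"
    and distinct: "inj_on e {1..N}"
    and gamma: "\<gamma> > 0"
    and D1: "\<forall>k\<in>{1..N}. \<forall>t. (L k has_real_derivative L1 k t) (at t)"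
    and D2: "\<forall>k\<in>{1..N}. \<forall>t. (L1 k has_real_derivative L2 k t) (at t)"
    and C2: "\<forall>k\<in>{1..N}. continuous_on UNIV (L2 k)"
    and convex: "\<forall>k\<in>{1..N}. \<forall>t. L2 k t \<ge> \<gamma>"
    and ij: "i \<in> {1..N}" "j \<in> {1..N}"
    and yx: "y \<in> Jray e j" "x \<in> Jray e i"
  shows "D_junction e N L y x =
           (if (y, x) \<in> Delta e N L j i then ereal (D_linear e N L j i y x)
            else D_implicit e N L y x)"
proof -
  define L0 where "L0 = L00 L N"
  have L0le: "L0 \<le> L l 0" if "l \<in> {1..N}" for l
    unfolding L0_def L00_def using that by (intro Min_le) auto
  have dl: "\<And>t. (L l has_real_derivative L1 l t) (at t)" if "l \<in> {1..N}" for l using D1 that by blast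
  have d2l: "\<And>t. (L1 l has_real_derivative L2 l t) (at t)" if "l \<in> {1..N}" for l using D2 that by blast
  have gl: "\<And>t. L2 l t \<ge> \<gamma>" if "l \<in> {1..N}" for l using convex that by blast
  have Kf: "Kfun L N l \<xi> = L l \<xi> - \<xi> * L1 l \<xi> - L0" if "l \<in> {1..N}" for l \<xi>
    unfolding Kfun_def L0_def using DERIV_imp_deriv[OF dl[OF that]] by simp
  have derivL: "deriv (L l) \<xi> = L1 l \<xi>" if "l \<in> {1..N}" for l \<xi>
    using DERIV_imp_deriv[OF dl[OF that]] by simp
  have I0iff: "l \<in> I0 L N \<longleftrightarrow> L l 0 = L0" if "l \<in> {1..N}" for l
    unfolding I0_def L0_def using that by simp
  define m where "m = xi_minus L N j"
  note KMj = K_minus[OF dl[OF ij(2)] d2l[OF ij(2)] gl[OF ij(2)] gamma L0le[OF ij(2)]]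
  have m: "m \<le> 0 \<and> L j m - m * L1 j m - L0 = 0"
    unfolding m_def xi_minus_def Kf[OF ij(2)] by (rule theI'[OF KMj(1)])
  have mI0: "j \<in> I0 L N \<longleftrightarrow> m = 0"
  proof
    assume "j \<in> I0 L N"
    then have "L j 0 = L0" using I0iff ij by auto
    then have "0 \<le> (0::real) \<and> L j 0 - 0 * L1 j 0 - L0 = 0" by simp
    then show "m = 0" using KMj(1) m by blast
  next
    assume "m = 0" then show "j \<in> I0 L N" using m I0iff ij by auto
  qed
  define P where "P = xi_plus L N i"
  note KPi = K_plus[OF dl[OF ij(1)] d2l[OF ij(1)] gl[OF ij(1)] gamma L0le[OF ij(1)]]
  have P: "P \<ge> 0 \<and> L i P - P * L1 i P - L0 = 0"
    unfolding P_def xi_plus_def Kf[OF ij(1)] by (rule theI'[OF KPi(1)])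
  have PI0: "i \<in> I0 L N \<longleftrightarrow> P = 0"
  proof
    assume "i \<in> I0 L N"
    then have "L i 0 = L0" using I0iff ij by auto
    then have "0 \<le> (0::real) \<and> L i 0 - 0 * L1 i 0 - L0 = 0" by simp
    then show "P = 0" using KPi(1) P by blast
  next
    assume "P = 0" then show "i \<in> I0 L N" using P I0iff ij by auto
  qed
  have Kmle: "L j s - s * L1 j s - L0 \<le> 0" if "s \<le> m" for s using KMj(2)[of m s] m that by blast
  have Kmge: "L j s - s * L1 j s - L0 \<ge> 0" if "m \<le> s" "s \<le> 0" for s using KMj(3)[of m s] m that by blast
  have Kple: "L i s - s * L1 i s - L0 \<le> 0" if "P \<le> s" for s using KPi(2)[of P s] P that by blast
  have Kpge: "L i s - s * L1 i s - L0 \<ge> 0" if "s \<le> P" "0 \<le> s" for s using KPi(3)[of P s] P that by blast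
  define a where "a = coord e j y"
  define b where "b = coord e i x"
  have a0: "a \<ge> 0" and ya: "y = a *\<^sub>R e j" using ray_coord[of e j y] unit ij yx unfolding a_def by auto
  have b0: "b \<ge> 0" and xb: "x = b *\<^sub>R e i" using ray_coord[of e i x] unit ij yx unfolding b_def by auto
  have ny: "norm (e j) = 1" using unit ij by auto
  have nx: "norm (e i) = 1" using unit ij by auto
  have y0a: "y = 0 \<longleftrightarrow> a = 0" proof - have "e j \<noteq> 0" using ny by auto then show ?thesis using ya by auto qed
  have x0b: "x = 0 \<longleftrightarrow> b = 0" proof - have "e i \<noteq> 0" using nx by auto then show ?thesis using xb by auto qed
  define g where "g = (\<lambda>\<tau>. E1 e N L \<tau> y)"
  define h where "h = (\<lambda>\<tau>. E2 e N L \<tau> x)"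
  have gy0: "g \<tau> = 0" if "y = 0" for \<tau> unfolding g_def E1_def using that by simp
  have gpos: "g \<tau> = (if \<tau> = 0 then \<infinity> else ereal (\<tau> * L j (- a / \<tau>) - \<tau> * L0))" if "y \<noteq> 0" for \<tau>
    unfolding g_def E1_def L0_def a_def using that branch_eq[OF unit distinct ij(2) yx(1)] by simp
  have hx0: "h \<tau> = ereal L0" if "x = 0" for \<tau> unfolding h_def E2_def L0_def using that by simp
  have hpos: "h \<tau> = (if \<tau> = 1 then \<infinity> else ereal ((1 - \<tau>) * L i (b / (1 - \<tau>)) + \<tau> * L0))" if "x \<noteq> 0" for \<tau>
    unfolding h_def E2_def L0_def b_def using that branch_eq[OF unit distinct ij(1) yx(2)] by simp
  define p where "p = (if m = 0 then 1 else min 1 (a / (- m)))"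
  define q where "q = (if P = 0 then 0 else max 0 (1 - b / P))"
  have p01: "0 \<le> p" "p \<le> 1" unfolding p_def using a0 m by (auto simp: divide_nonneg_nonpos)
  have q01: "0 \<le> q" "q \<le> 1" unfolding q_def using b0 P by auto
  have gdec: "g t \<le> g s" if st: "0 \<le> s" "s \<le> t" "t \<le> p" for s t
  proof (cases "y = 0")
    case True then show ?thesis using gy0 by simp
  next
    case False
    show ?thesis
    proof (cases "s = 0")
      case True then show ?thesis using gpos[OF False] by simp
    next
      case s0: False
      have "t * L j (- a / t) - t * L0 \<le> s * L j (- a / s) - s * L0"
      proof (rule deriv_nonpos_imp_antimono[of s t])
        fix \<tau> assume \<tau>: "\<tau> \<in> {s..t}"
        then have tp: "\<tau> > 0" using st s0 by auto
        show "((\<lambda>\<tau>. \<tau> * L j (- a / \<tau>) - \<tau> * L0) has_real_derivative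
              (L j (- a / \<tau>) - (- a / \<tau>) * L1 j (- a / \<tau>) - L0)) (at \<tau>)"
          using phi_deriv[OF dl[OF ij(2)]] tp by simp
        have "- a / \<tau> \<le> m"
        proof (cases "m = 0")
          case True then show ?thesis using a0 tp by simp
        next
          case False
          then have mneg: "m < 0" using m by simp
          have "\<tau> \<le> a / (- m)" using \<tau> st p_def False by auto
          then have "\<tau> * (- m) \<le> a" using mneg by (simp add: field_simps)
          then show ?thesis using tp by (simp add: field_simps)
        qed
        then show "L j (- a / \<tau>) - (- a / \<tau>) * L1 j (- a / \<tau>) - L0 \<le> 0" by (rule Kmle)
      qed (use st in auto)
      then show ?thesis using gpos[OF False] s0 st by simp
    qed
  qed
  have ginc: "g s \<le> g t" if st: "p \<le> s" "s \<le> t" "t \<le> 1" for s t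
  proof (cases "y = 0 \<or> s = t")
    case True then show ?thesis using gy0 by auto
  next
    case False
    then have y0: "y \<noteq> 0" and slt: "s < t" using st by auto
    have mneg: "m < 0" and pe: "p = a / (- m)"
      using slt st p_def m by (auto split: if_splits)
    have apos: "a > 0" using y0a y0 a0 by simp
    have ppos: "p > 0" using pe apos mneg by (simp add: divide_pos_neg)
    have "s * L j (- a / s) - s * L0 \<le> t * L j (- a / t) - t * L0"
    proof (rule deriv_nonneg_imp_mono[of s t])
      fix \<tau> assume \<tau>: "\<tau> \<in> {s..t}"
      then have tp: "\<tau> > 0" using st ppos by auto
      show "((\<lambda>\<tau>. \<tau> * L j (- a / \<tau>) - \<tau> * L0) has_real_derivative
            (L j (- a / \<tau>) - (- a / \<tau>) * L1 j (- a / \<tau>) - L0)) (at \<tau>)"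
        using phi_deriv[OF dl[OF ij(2)]] tp by simp
      have "a / (- m) \<le> \<tau>" using \<tau> st pe by auto
      then have "a \<le> \<tau> * (- m)" using mneg by (simp add: field_simps)
      then have "m \<le> - a / \<tau>" using tp by (simp add: field_simps)
      moreover have "- a / \<tau> \<le> 0" using tp a0 by simp
      ultimately show "L j (- a / \<tau>) - (- a / \<tau>) * L1 j (- a / \<tau>) - L0 \<ge> 0" by (rule Kmge)
    qed (use st in auto)
    then show ?thesis using gpos[OF y0] ppos st by simp
  qed
  have hdec: "h t \<le> h s" if st: "0 \<le> s" "s \<le> t" "t \<le> q" for s t
  proof (cases "x = 0 \<or> s = t")
    case True then show ?thesis using hx0 by auto
  next
    case False
    then have x0: "x \<noteq> 0" and slt: "s < t" using st by auto
    have Ppos: "P > 0" and qe: "q = 1 - b / P"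
      using slt st q_def P by (auto split: if_splits)
    have bpos: "b > 0" using x0b x0 b0 by simp
    have q1: "q < 1" using qe bpos Ppos by simp
    have "(1 - t) * L i (b / (1 - t)) + t * L0 \<le> (1 - s) * L i (b / (1 - s)) + s * L0"
    proof (rule deriv_nonpos_imp_antimono[of s t])
      fix \<tau> assume \<tau>: "\<tau> \<in> {s..t}"
      then have t1: "\<tau> < 1" using st q1 by auto
      show "((\<lambda>\<tau>. (1 - \<tau>) * L i (b / (1 - \<tau>)) + \<tau> * L0) has_real_derivative
            - (L i (b / (1 - \<tau>)) - (b / (1 - \<tau>)) * L1 i (b / (1 - \<tau>)) - L0)) (at \<tau>)"
        using psi_deriv[OF dl[OF ij(1)]] t1 by simp
      have "\<tau> \<le> 1 - b / P" using \<tau> st qe by auto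
      then have "b / P \<le> 1 - \<tau>" by simp
      then have "b \<le> P * (1 - \<tau>)" using Ppos by (simp add: field_simps)
      then have "b / (1 - \<tau>) \<le> P" using t1 by (simp add: field_simps)
      moreover have "0 \<le> b / (1 - \<tau>)" using t1 b0 by simp
      ultimately have "L i (b / (1 - \<tau>)) - (b / (1 - \<tau>)) * L1 i (b / (1 - \<tau>)) - L0 \<ge> 0" by (rule Kpge)
      then show "- (L i (b / (1 - \<tau>)) - (b / (1 - \<tau>)) * L1 i (b / (1 - \<tau>)) - L0) \<le> 0" by simp
    qed (use st in auto)
    then show ?thesis using hpos[OF x0] q1 st by simp
  qed
  have hinc: "h s \<le> h t" if st: "q \<le> s" "s \<le> t" "t \<le> 1" for s t
  proof (cases "x = 0 \<or> t = 1")
    case True then show ?thesis using hx0 hpos[of t] by (cases "x = 0") auto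
  next
    case False
    then have x0: "x \<noteq> 0" and t1: "t < 1" using st by auto
    have "(1 - s) * L i (b / (1 - s)) + s * L0 \<le> (1 - t) * L i (b / (1 - t)) + t * L0"
    proof (rule deriv_nonneg_imp_mono[of s t])
      fix \<tau> assume \<tau>: "\<tau> \<in> {s..t}"
      then have tt1: "\<tau> < 1" using t1 by auto
      show "((\<lambda>\<tau>. (1 - \<tau>) * L i (b / (1 - \<tau>)) + \<tau> * L0) has_real_derivative
            - (L i (b / (1 - \<tau>)) - (b / (1 - \<tau>)) * L1 i (b / (1 - \<tau>)) - L0)) (at \<tau>)"
        using psi_deriv[OF dl[OF ij(1)]] tt1 by simp
      have "P \<le> b / (1 - \<tau>)"
      proof (cases "P = 0")
        case True then show ?thesis using tt1 b0 by simp
      next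
        case False
        then have Ppos: "P > 0" using P by simp
        have "1 - b / P \<le> \<tau>" using \<tau> st q_def False by auto
        then have "1 - \<tau> \<le> b / P" by simp
        then have "P * (1 - \<tau>) \<le> b" using Ppos by (simp add: field_simps)
        then show ?thesis using tt1 by (simp add: field_simps)
      qed
      then have "L i (b / (1 - \<tau>)) - (b / (1 - \<tau>)) * L1 i (b / (1 - \<tau>)) - L0 \<le> 0" by (rule Kple)
      then show "- (L i (b / (1 - \<tau>)) - (b / (1 - \<tau>)) * L1 i (b / (1 - \<tau>)) - L0) \<ge> 0" by simp
    qed (use st in auto)
    then show ?thesis using hpos[OF x0] t1 st by simp
  qed
  have gdec0: "\<forall>s t. 0 \<le> s \<and> s \<le> t \<and> t \<le> p \<longrightarrow> g t \<le> g s" using gdec by blast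
  have ginc0: "\<forall>s t. p \<le> s \<and> s \<le> t \<and> t \<le> 1 \<longrightarrow> g s \<le> g t" using ginc by blast
  have hdec0: "\<forall>s t. 0 \<le> s \<and> s \<le> t \<and> t \<le> q \<longrightarrow> h t \<le> h s" using hdec by blast
  have hinc0: "\<forall>s t. q \<le> s \<and> s \<le> t \<and> t \<le> 1 \<longrightarrow> h s \<le> h t" using hinc by blast
  note JI = junction_inf[of p q g h, OF p01 q01 gdec0 ginc0 hdec0 hinc0]
  have DJ: "D_junction e N L y x = Inf {g t1 + h t2 | t1 t2. 0 \<le> t1 \<and> t1 \<le> t2 \<and> t2 \<le> 1}"
    unfolding D_junction_def g_def h_def by simp
  have DI: "D_implicit e N L y x = Inf {g t + h t | t. 0 \<le> t \<and> t \<le> 1}"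
    unfolding D_implicit_def g_def h_def by simp
  have Deltaiff: "(y, x) \<in> Delta e N L j i \<longleftrightarrow> P \<noteq> 0 \<and> m \<noteq> 0 \<and> b / P - a / m < 1"
    unfolding Delta_def using yx PI0 mI0 by (simp add: a_def b_def P_def m_def)
  show ?thesis
  proof (cases "(y, x) \<in> Delta e N L j i")
    case True
    then have Pp: "P > 0" and mn: "m < 0" and lt: "b / P - a / m < 1" using Deltaiff P m by auto
    have amm: "a / (- m) = - (a / m)" by simp
    have am: "a / (- m) \<ge> 0" using a0 mn by (simp add: divide_nonneg_neg)
    have bP: "b / P \<ge> 0" using b0 Pp by simp
    have lt': "a / (- m) < 1 - b / P" using lt amm by linarith
    have pe: "p = a / (- m)" unfolding p_def using mn lt' bP by auto
    have qe: "q = 1 - b / P" unfolding q_def using Pp lt' am by auto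
    have pq: "p \<le> q" using pe qe lt' by simp
    have gp: "g p = ereal (- a * L1 j m)"
    proof (cases "y = 0")
      case True then show ?thesis using gy0 y0a by simp
    next
      case False
      then have apos: "a > 0" using y0a a0 by simp
      then have ppos: "p > 0" using pe mn by (simp add: divide_pos_neg)
      have "- a / p = m" using pe apos mn ppos by (simp add: field_simps)
      then have "p * L j (- a / p) - p * L0 = p * (L j m - L0)" by (simp add: algebra_simps)
      also have "\<dots> = p * (m * L1 j m)" using m by simp
      also have "\<dots> = (m * p) * L1 j m" by (simp add: algebra_simps)
      also have "m * p = - a" using pe mn by (simp add: field_simps)
      finally have "p * L j (- a / p) - p * L0 = - a * L1 j m" by simp
      then show ?thesis using gpos[OF False] ppos by simp
    qed
    have hq: "h q = ereal (b * L1 i P + L0)"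
    proof (cases "x = 0")
      case True then show ?thesis using hx0 x0b by simp
    next
      case False
      then have bpos: "b > 0" using x0b b0 by simp
      then have q1: "q < 1" using qe Pp by simp
      have "1 - q = b / P" using qe by simp
      then have "b / (1 - q) = P" using bpos Pp by simp
      then have "(1 - q) * L i (b / (1 - q)) + q * L0 = (1 - q) * (L i P - L0) + L0"
        by (simp add: algebra_simps)
      also have "\<dots> = (1 - q) * (P * L1 i P) + L0" using P by simp
      also have "\<dots> = ((1 - q) * P) * L1 i P + L0" by (simp add: algebra_simps)
      also have "(1 - q) * P = b" using qe Pp by (simp add: field_simps)
      finally have "(1 - q) * L i (b / (1 - q)) + q * L0 = b * L1 i P + L0" by simp
      then show ?thesis using hpos[OF False] q1 by simp
    qed
    have "D_junction e N L y x = g p + h q" using DJ JI(2)[OF pq] by simp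
    also have "\<dots> = ereal (D_linear e N L j i y x)"
      unfolding gp hq D_linear_def derivL[OF ij(1)] derivL[OF ij(2)]
      by (simp add: a_def b_def m_def P_def L0_def)
    finally show ?thesis using True by simp
  next
    case False
    have qp: "q \<le> p"
    proof (cases "P = 0 \<or> m = 0")
      case True then show ?thesis using p01 q01 unfolding p_def q_def by auto
    next
      case nz: False
      then have Pp: "P > 0" and mn: "m < 0" using P m by auto
      have "\<not> b / P - a / m < 1" using False Deltaiff nz by auto
      moreover have "a / (- m) = - (a / m)" by simp
      ultimately have "1 - b / P \<le> a / (- m)" by linarith
      moreover have "a / (- m) \<ge> 0" using a0 mn by (simp add: divide_nonneg_neg)
      moreover have "b / P \<ge> 0" using b0 Pp by simp
      ultimately show ?thesis unfolding p_def q_def using nz by auto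
    qed
    show ?thesis using DJ DI JI(1)[OF qp] False by simp
  qed
qed

end
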